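(* Let $g$ be any connected undirected graph with $n$ processors and diameter $diam(g)$, with unique identifiers $id_v \in \{0,\dots,n-1\}$. The protocol $\mathcal{EMSS}$ is self-stabilizing for the mutual exclusion specification $spec_{EM}$ under the unfair distributed daemon $did$.
   Context: Model (state model with shared variables): a distributed system is a connected undirected graph $g=(V,E)$ whose vertices are processors and edges are communication links; $vois(v)$ is the set of neighbours of $v$; $n=|V|$; $diam(g)$ is the diameter of $g$. Each processor $v$ has a unique identity $id_v\in\{0,\dots,n-1\}$. The state of a processor is the value of its variables; a configuration is the tuple of all processor states. A protocol is a set of rules $\langle guard\rangle \to \langle action\rangle$, where the guard is a predicate on the state of the processor and of its neighbours and the action updates the processor's own state. A processor is enabled if one of its guards is true. In a step, a daemon selects a nonempty subset of the enabled processors, and each selected processor atomically executes the action of a true guard, all selected processors reading the configuration at the beginning of the step. An execution is a maximal sequence of configurations linked by steps. The unfair distributed daemon $did$ imposes no constraint on the (nonempty) selected set. The synchronous daemon $ds$ selects all enabled processors at every step. Self-stabilization: a protocol $\pi$ is self-stabilizing for a specification $spec$ under daemon $d$ if, from any configuration, every execution of $\pi$ under $d$ contains a configuration from which every execution of $\pi$ under $d$ satisfies $spec$. Mutual exclusion: each processor $v$ has a predicate $privilege_v$; $v$ is privileged in a configuration $\gamma$ iff $privilege_v$ is true in $\gamma$; if $v$ is privileged in $\gamma$ and is activated during step $(\gamma,\gamma')$, then $v$ executes its critical section during that step. An execution satisfies $spec_{EM}$ if in every configuration at most one processor is privileged (safety) and every processor executes its critical section infinitely often (liveness). Protocol $\mathcal{EMSS}$.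 Let $K=(2n-1)(diam(g)+1)+2$. Bounded clock: the set $H=\{-n,-n+1,\dots,0,\dots,K-1\}$ with increment $\phi(c)=c+1$ if $c<0$ and $\phi(c)=(c+1)\bmod K$ if $c\ge 0$. For an integer $c$ let $\overline{c}\in\{0,\dots,K-1\}$ with $c\equiv \overline c \pmod K$; $d_K(c,c')=\min\{\overline{c-c'},\overline{c'-c}\}$; $c\le_l c'$ iff $0\le \overline{c'-c}\le 1$. Let $init=\{-n,\dots,0\}$, $init^*=\{-n,\dots,-1\}$, $stab=\{0,\dots,K-1\}$, and $\le_{init}$ the usual order of integers on $init$. Each processor $v$ has one variable $r_v\in H$. Predicates: $privilege_v \equiv (r_v = 2n + 2\,diam(g)\,id_v)$; $correct_v(u)\equiv (r_v\in stab)\wedge(r_u\in stab)\wedge(d_K(r_v,r_u)\le 1)$; $tousCorrects_v\equiv \forall u\in vois(v),\ correct_v(u)$; $etapeNorm_v\equiv tousCorrects_v\wedge \forall u\in vois(v),\ r_v\le_l r_u$; $reInit_v\equiv \neg tousCorrects_v \wedge r_v\notin init$; $etapeConv_v\equiv r_v\in init^*\wedge \forall u\in vois(v),\ (r_u\in init \wedge r_v\le_{init} r_u)$. Rules: $NA:: etapeNorm_v \to r_v:=\phi(r_v)$; $CA:: etapeConv_v\to r_v:=\phi(r_v)$; $RA:: reInit_v\to r_v:=-n$. *)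

theory Defs
  imports Main "HOL-Library.Extended_Nat"
begin

definition is_conn_graph :: "'v set \<Rightarrow> ('v \<Rightarrow> 'v \<Rightarrow> bool) \<Rightarrow> bool" where
  "is_conn_graph V E \<longleftrightarrow> finite V \<and> V \<noteq> {}
     \<and> (\<forall>u v. E u v \<longrightarrow> u \<in> V \<and> v \<in> V)
     \<and> (\<forall>u v. E u v \<longrightarrow> E v u)
     \<and> (\<forall>u. \<not> E u u)
     \<and> (\<forall>u\<in>V. \<forall>v\<in>V. E\<^sup>*\<^sup>* u v)"

definition vois :: "('v \<Rightarrow> 'v \<Rightarrow> bool) \<Rightarrow> 'v \<Rightarrow> 'v set" where
  "vois E v = {u. E v u}"

definition nproc :: "'v set \<Rightarrow> nat" where
  "nproc V = card V"

definition gdist :: "('v \<Rightarrow> 'v \<Rightarrow> bool) \<Rightarrow> 'v \<Rightarrow> 'v \<Rightarrow> nat" where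
  "gdist E u v = (LEAST k. (E ^^ k) u v)"

definition diam :: "'v set \<Rightarrow> ('v \<Rightarrow> 'v \<Rightarrow> bool) \<Rightarrow> nat" where
  "diam V E = Max {gdist E u v | u v. u \<in> V \<and> v \<in> V}"

definition Kc :: "'v set \<Rightarrow> ('v \<Rightarrow> 'v \<Rightarrow> bool) \<Rightarrow> int" where
  "Kc V E = (2 * int (nproc V) - 1) * (int (diam V E) + 1) + 2"

definition Hset :: "'v set \<Rightarrow> ('v \<Rightarrow> 'v \<Rightarrow> bool) \<Rightarrow> int set" where
  "Hset V E = {- int (nproc V) .. Kc V E - 1}"

definition phi :: "'v set \<Rightarrow> ('v \<Rightarrow> 'v \<Rightarrow> bool) \<Rightarrow> int \<Rightarrow> int" where
  "phi V E c = (if c < 0 then c + 1 else (c + 1) mod Kc V E)"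

definition bar :: "int \<Rightarrow> int \<Rightarrow> int" where
  "bar K c = c mod K"

definition dK :: "int \<Rightarrow> int \<Rightarrow> int \<Rightarrow> int" where
  "dK K c c' = min (bar K (c - c')) (bar K (c' - c))"

definition le_l :: "int \<Rightarrow> int \<Rightarrow> int \<Rightarrow> bool" where
  "le_l K c c' \<longleftrightarrow> 0 \<le> bar K (c' - c) \<and> bar K (c' - c) \<le> 1"

definition init_set :: "'v set \<Rightarrow> int set" where
  "init_set V = {- int (nproc V) .. 0}"

definition initS_set :: "'v set \<Rightarrow> int set" where
  "initS_set V = {- int (nproc V) .. -1}"

definition stab_set :: "'v set \<Rightarrow> ('v \<Rightarrow> 'v \<Rightarrow> bool) \<Rightarrow> int set" where
  "stab_set V E = {0 .. Kc V E - 1}"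

definition privilege :: "'v set \<Rightarrow> ('v \<Rightarrow> 'v \<Rightarrow> bool) \<Rightarrow> ('v \<Rightarrow> nat) \<Rightarrow> ('v \<Rightarrow> int) \<Rightarrow> 'v \<Rightarrow> bool" where
  "privilege V E ident r v \<longleftrightarrow> r v = 2 * int (nproc V) + 2 * int (diam V E) * int (ident v)"

definition correct :: "'v set \<Rightarrow> ('v \<Rightarrow> 'v \<Rightarrow> bool) \<Rightarrow> ('v \<Rightarrow> int) \<Rightarrow> 'v \<Rightarrow> 'v \<Rightarrow> bool" where
  "correct V E r v u \<longleftrightarrow> r v \<in> stab_set V E \<and> r u \<in> stab_set V E \<and> dK (Kc V E) (r v) (r u) \<le> 1"

definition tousCorrects :: "'v set \<Rightarrow> ('v \<Rightarrow> 'v \<Rightarrow> bool) \<Rightarrow> ('v \<Rightarrow> int) \<Rightarrow> 'v \<Rightarrow> bool" where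
  "tousCorrects V E r v \<longleftrightarrow> (\<forall>u\<in>vois E v. correct V E r v u)"

definition etapeNorm :: "'v set \<Rightarrow> ('v \<Rightarrow> 'v \<Rightarrow> bool) \<Rightarrow> ('v \<Rightarrow> int) \<Rightarrow> 'v \<Rightarrow> bool" where
  "etapeNorm V E r v \<longleftrightarrow> tousCorrects V E r v \<and> (\<forall>u\<in>vois E v. le_l (Kc V E) (r v) (r u))"

definition reInit :: "'v set \<Rightarrow> ('v \<Rightarrow> 'v \<Rightarrow> bool) \<Rightarrow> ('v \<Rightarrow> int) \<Rightarrow> 'v \<Rightarrow> bool" where
  "reInit V E r v \<longleftrightarrow> \<not> tousCorrects V E r v \<and> r v \<notin> init_set V"

definition etapeConv :: "'v set \<Rightarrow> ('v \<Rightarrow> 'v \<Rightarrow> bool) \<Rightarrow> ('v \<Rightarrow> int) \<Rightarrow> 'v \<Rightarrow> bool" where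
  "etapeConv V E r v \<longleftrightarrow> r v \<in> initS_set V
     \<and> (\<forall>u\<in>vois E v. r u \<in> init_set V \<and> r v \<le> r u)"

definition enabled :: "'v set \<Rightarrow> ('v \<Rightarrow> 'v \<Rightarrow> bool) \<Rightarrow> ('v \<Rightarrow> int) \<Rightarrow> 'v \<Rightarrow> bool" where
  "enabled V E r v \<longleftrightarrow> etapeNorm V E r v \<or> etapeConv V E r v \<or> reInit V E r v"

text \<open>Possible new values of r v when v executes the action of a true guard (rules NA, CA, RA).\<close>
definition action_results :: "'v set \<Rightarrow> ('v \<Rightarrow> 'v \<Rightarrow> bool) \<Rightarrow> ('v \<Rightarrow> int) \<Rightarrow> 'v \<Rightarrow> int set" where
  "action_results V E r v =
     (if etapeNorm V E r v then {phi V E (r v)} else {})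
   \<union> (if etapeConv V E r v then {phi V E (r v)} else {})
   \<union> (if reInit V E r v then {- int (nproc V)} else {})"

definition is_config :: "'v set \<Rightarrow> ('v \<Rightarrow> 'v \<Rightarrow> bool) \<Rightarrow> ('v \<Rightarrow> int) \<Rightarrow> bool" where
  "is_config V E r \<longleftrightarrow> (\<forall>v\<in>V. r v \<in> Hset V E)"

definition step_did :: "'v set \<Rightarrow> ('v \<Rightarrow> 'v \<Rightarrow> bool) \<Rightarrow> ('v \<Rightarrow> int) \<Rightarrow> 'v set \<Rightarrow> ('v \<Rightarrow> int) \<Rightarrow> bool" where
  "step_did V E r S r' \<longleftrightarrow> S \<noteq> {} \<and> S \<subseteq> {v \<in> V. enabled V E r v}
     \<and> (\<forall>v\<in>S. r' v \<in> action_results V E r v)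
     \<and> (\<forall>v. v \<notin> S \<longrightarrow> r' v = r v)"

text \<open>An execution from r0: configurations sigma 0, sigma 1, ..., activated sets A i for the
  step (sigma i, sigma (i+1)), and len = number of steps (infinity for infinite executions).\<close>
definition is_exec_did :: "'v set \<Rightarrow> ('v \<Rightarrow> 'v \<Rightarrow> bool) \<Rightarrow> ('v \<Rightarrow> int)
    \<Rightarrow> (nat \<Rightarrow> 'v \<Rightarrow> int) \<Rightarrow> (nat \<Rightarrow> 'v set) \<Rightarrow> enat \<Rightarrow> bool" where
  "is_exec_did V E r0 \<sigma> A len \<longleftrightarrow> \<sigma> 0 = r0
     \<and> (\<forall>i. enat i < len \<longrightarrow> step_did V E (\<sigma> i) (A i) (\<sigma> (Suc i)))
     \<and> (\<forall>k. len = enat k \<longrightarrow> \<not> (\<exists>S r'. step_did V E (\<sigma> k) S r'))"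

definition spec_EM :: "'v set \<Rightarrow> ('v \<Rightarrow> 'v \<Rightarrow> bool) \<Rightarrow> ('v \<Rightarrow> nat)
    \<Rightarrow> (nat \<Rightarrow> 'v \<Rightarrow> int) \<Rightarrow> (nat \<Rightarrow> 'v set) \<Rightarrow> enat \<Rightarrow> bool" where
  "spec_EM V E ident \<sigma> A len \<longleftrightarrow>
     (\<forall>i. enat i \<le> len \<longrightarrow>
        (\<forall>u\<in>V. \<forall>v\<in>V. privilege V E ident (\<sigma> i) u \<and> privilege V E ident (\<sigma> i) v \<longrightarrow> u = v))
   \<and> (\<forall>v\<in>V. infinite {i. enat i < len \<and> v \<in> A i \<and> privilege V E ident (\<sigma> i) v})"

definition self_stab_EMSS_did :: "'v set \<Rightarrow> ('v \<Rightarrow> 'v \<Rightarrow> bool) \<Rightarrow> ('v \<Rightarrow> nat) \<Rightarrow> bool" where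
  "self_stab_EMSS_did V E ident \<longleftrightarrow>
     (\<forall>r0. is_config V E r0 \<longrightarrow>
        (\<forall>\<sigma> A len. is_exec_did V E r0 \<sigma> A len \<longrightarrow>
           (\<exists>i. enat i \<le> len \<and>
              (\<forall>\<sigma>' A' len'. is_exec_did V E (\<sigma> i) \<sigma>' A' len' \<longrightarrow> spec_EM V E ident \<sigma>' A' len'))))"

end

theory Submission
  imports Defs
begin

lemma modK: "0 \<le> (a::int) \<Longrightarrow> a < K \<Longrightarrow> 0 \<le> b \<Longrightarrow> b < K \<Longrightarrow> (a - b) mod K = (if b \<le> a then a - b else a - b + K)"
  by (smt (verit) mod_add_self2 mod_pos_pos_trivial)

locale G =
  fixes V :: "'v set" and E :: "'v \<Rightarrow> 'v \<Rightarrow> bool"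
  assumes conn: "is_conn_graph V E"
begin

abbreviation NN where "NN \<equiv> int (nproc V)"
abbreviation KK where "KK \<equiv> Kc V E"
abbreviation DD where "DD \<equiv> diam V E"

lemma finV: "finite V" using conn by (simp add: is_conn_graph_def)
lemma Vne: "V \<noteq> {}" using conn by (simp add: is_conn_graph_def)
lemma edgeV: "E u v \<Longrightarrow> u \<in> V \<and> v \<in> V" using conn by (simp add: is_conn_graph_def)
lemma esym: "E u v \<Longrightarrow> E v u" using conn by (simp add: is_conn_graph_def)
lemma eirr: "\<not> E u u" using conn by (simp add: is_conn_graph_def)
lemma econn: "u \<in> V \<Longrightarrow> v \<in> V \<Longrightarrow> E\<^sup>*\<^sup>* u v" using conn by (simp add: is_conn_graph_def)

lemma n_pos: "NN \<ge> 1"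
  using finV Vne by (simp add: nproc_def Suc_le_eq card_gt_0_iff)

lemma K_eq: "KK = (2 * NN - 1) * (int DD + 1) + 2" by (simp add: Kc_def)

lemma K_ge3: "KK \<ge> 3"
proof -
  have "1 * 1 \<le> (2 * NN - 1) * (int DD + 1)" using n_pos by (intro mult_mono) auto
  then show ?thesis using K_eq by linarith
qed

lemma stab_iff[simp]: "x \<in> stab_set V E \<longleftrightarrow> 0 \<le> x \<and> x < KK"
  by (auto simp: stab_set_def)
lemma init_iff[simp]: "x \<in> init_set V \<longleftrightarrow> - NN \<le> x \<and> x \<le> 0"
  by (auto simp: init_set_def)
lemma initS_iff[simp]: "x \<in> initS_set V \<longleftrightarrow> - NN \<le> x \<and> x \<le> -1"
  by (auto simp: initS_set_def)
lemma H_iff[simp]: "x \<in> Hset V E \<longleftrightarrow> - NN \<le> x \<and> x < KK"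
  by (auto simp: Hset_def)

lemma phi_neg: "x < 0 \<Longrightarrow> phi V E x = x + 1" by (simp add: phi_def)
lemma phi_pos: "0 \<le> x \<Longrightarrow> x < KK \<Longrightarrow> phi V E x = (if x = KK - 1 then 0 else x + 1)"
  using K_ge3 by (auto simp: phi_def)

lemma dK_le1: "0 \<le> a \<Longrightarrow> a < KK \<Longrightarrow> 0 \<le> b \<Longrightarrow> b < KK \<Longrightarrow>
   dK KK a b \<le> 1 \<longleftrightarrow> (a = b \<or> a = b + 1 \<or> b = a + 1 \<or> (a = 0 \<and> b = KK - 1) \<or> (b = 0 \<and> a = KK - 1))"
  using K_ge3 by (auto simp: dK_def bar_def modK)

lemma le_l_iff: "0 \<le> a \<Longrightarrow> a < KK \<Longrightarrow> 0 \<le> b \<Longrightarrow> b < KK \<Longrightarrow>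
   le_l KK a b \<longleftrightarrow> (b = a \<or> b = a + 1 \<or> (a = KK - 1 \<and> b = 0))"
  using K_ge3 by (auto simp: le_l_def bar_def modK)

lemma correct_iff: "correct V E r v u \<longleftrightarrow> 0 \<le> r v \<and> r v < KK \<and> 0 \<le> r u \<and> r u < KK \<and>
   (r v = r u \<or> r v = r u + 1 \<or> r u = r v + 1 \<or> (r v = 0 \<and> r u = KK - 1) \<or> (r u = 0 \<and> r v = KK - 1))"
  unfolding correct_def by (auto simp: dK_le1)


lemma phi_lt: "- NN \<le> x \<Longrightarrow> x < KK \<Longrightarrow> - NN \<le> phi V E x \<and> phi V E x < KK"
  using K_ge3 n_pos by (auto simp: phi_def intro: order_trans[OF _ pos_mod_sign])

lemma step_move:
  assumes st: "step_did V E r S r'" and vS: "v \<in> S"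
  shows "v \<in> V \<and> ((etapeNorm V E r v \<and> r' v = phi V E (r v)) \<or> (etapeConv V E r v \<and> r' v = r v + 1)
          \<or> (reInit V E r v \<and> r' v = - NN))"
proof -
  have "v \<in> V" using st vS by (auto simp: step_did_def)
  moreover have "r' v \<in> action_results V E r v" using st vS by (auto simp: step_did_def)
  moreover have "etapeConv V E r v \<Longrightarrow> phi V E (r v) = r v + 1"
    by (simp add: etapeConv_def phi_neg)
  ultimately show ?thesis by (auto simp: action_results_def split: if_splits)
qed

lemma step_stay: "step_did V E r S r' \<Longrightarrow> v \<notin> S \<Longrightarrow> r' v = r v"
  by (simp add: step_did_def)

lemma step_config:
  assumes c: "is_config V E r" and st: "step_did V E r S r'"
  shows "is_config V E r'"
  unfolding is_config_def
proof
  fix v assume v: "v \<in> V"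
  have b: "- NN \<le> r v" "r v < KK" using c v by (auto simp: is_config_def)
  show "r' v \<in> Hset V E"
  proof (cases "v \<in> S")
    case True
    then show ?thesis using step_move[OF st True] b phi_lt[of "r v"] K_ge3 n_pos
      by (auto simp: etapeConv_def)
  next
    case False
    then show ?thesis using step_stay[OF st False] b by simp
  qed
qed

lemma cfg: "is_config V E r \<Longrightarrow> v \<in> V \<Longrightarrow> - NN \<le> r v \<and> r v < KK"
  by (auto simp: is_config_def)

lemma tc_nb: "tousCorrects V E r v \<Longrightarrow> E v u \<Longrightarrow> correct V E r v u"
  by (auto simp: tousCorrects_def vois_def)

lemma up_step:
  assumes c: "is_config V E r" and st: "step_did V E r S r'" and v: "v \<in> V"
    and L: "r v < L" "L \<le> r' v" "L \<le> 1"
  shows "v \<in> S \<and> r' v = r v + 1 \<and> (\<forall>u. E v u \<longrightarrow> r v \<le> r u \<and> (r v < 0 \<longrightarrow> r u \<le> 0))"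
proof -
  have vS: "v \<in> S" using step_stay[OF st] L by force
  have b: "- NN \<le> r v" "r v < KK" using cfg[OF c v] by auto
  have d: "(etapeNorm V E r v \<and> r' v = phi V E (r v)) \<or> (etapeConv V E r v \<and> r' v = r v + 1)
          \<or> (reInit V E r v \<and> r' v = - NN)" using step_move[OF st vS] by blast
  from d show ?thesis
  proof (elim disjE)
    assume "reInit V E r v \<and> r' v = - NN" then show ?thesis using b L by auto
  next
    assume a: "etapeConv V E r v \<and> r' v = r v + 1"
    then show ?thesis using vS by (auto simp: etapeConv_def vois_def)
  next
    assume a: "etapeNorm V E r v \<and> r' v = phi V E (r v)"
    show ?thesis
    proof (cases "\<exists>u. E v u")
      case True
      then obtain u where "E v u" by auto
      then have "r v \<ge> 0" using a by (auto simp: etapeNorm_def correct_def dest: tc_nb)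
      then have "r v = 0" using L by simp
      moreover have "\<forall>u. E v u \<longrightarrow> 0 \<le> r u" using a by (auto simp: etapeNorm_def correct_def dest: tc_nb)
      ultimately show ?thesis using a vS phi_pos[of 0] K_ge3 by auto
    next
      case False
      then show ?thesis using a vS L phi_pos[of "r v"] phi_neg[of "r v"] b
        by (cases "r v < 0") auto
    qed
  qed
qed

lemma down_step:
  assumes c: "is_config V E r" and st: "step_did V E r S r'" and v: "v \<in> V"
    and L: "0 \<le> r v" "r' v < 0"
  shows "v \<in> S \<and> reInit V E r v \<and> r' v = - NN"
proof -
  have vS: "v \<in> S" using step_stay[OF st] L by force
  have b: "- NN \<le> r v" "r v < KK" using cfg[OF c v] by auto
  from step_move[OF st vS] L b phi_pos[of "r v"] show ?thesis
    by (auto simp: etapeConv_def vS split: if_splits)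
qed

lemma moved_norm:
  assumes c: "is_config V E r" and st: "step_did V E r S r'" and x: "x \<in> S"
    and nn: "0 \<le> r x" "0 \<le> r' x"
  shows "etapeNorm V E r x \<and> r' x = phi V E (r x)"
  using step_move[OF st x] nn n_pos by (auto simp: etapeConv_def)

lemma correct_persist:
  assumes c: "is_config V E r" and st: "step_did V E r S r'" and e: "E u w"
    and cr: "correct V E r u w" and nn: "0 \<le> r' u" "0 \<le> r' w"
  shows "correct V E r' u w"
proof -
  have ru: "0 \<le> r u" "r u < KK" "0 \<le> r w" "r w < KK" using cr by (auto simp: correct_def)
  have mv: "r' x = r x \<or> (r' x = phi V E (r x) \<and> le_l KK (r x) (r y))"
    if "(x = u \<and> y = w) \<or> (x = w \<and> y = u)" for x y
  proof (cases "x \<in> S")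
    case True
    have "0 \<le> r x" "0 \<le> r' x" using that ru nn by auto
    from moved_norm[OF c st True this] that e esym show ?thesis
      by (auto simp: etapeNorm_def vois_def)
  next
    case False then show ?thesis using step_stay[OF st] by auto
  qed
  have m1: "r' u = r u \<or> (r' u = phi V E (r u) \<and> le_l KK (r u) (r w))" using mv[of u w] by auto
  have m2: "r' w = r w \<or> (r' w = phi V E (r w) \<and> le_l KK (r w) (r u))" using mv[of w u] by auto
  have p1: "phi V E (r u) = (if r u = KK - 1 then 0 else r u + 1)" using phi_pos ru by auto
  have p2: "phi V E (r w) = (if r w = KK - 1 then 0 else r w + 1)" using phi_pos ru by auto
  have l1: "le_l KK (r u) (r w) \<longleftrightarrow> (r w = r u \<or> r w = r u + 1 \<or> (r u = KK - 1 \<and> r w = 0))"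
    using le_l_iff ru by auto
  have l2: "le_l KK (r w) (r u) \<longleftrightarrow> (r u = r w \<or> r u = r w + 1 \<or> (r w = KK - 1 \<and> r u = 0))"
    using le_l_iff ru by auto
  have cc: "(r u = r w \<or> r u = r w + 1 \<or> r w = r u + 1 \<or> (r u = 0 \<and> r w = KK - 1) \<or> (r w = 0 \<and> r u = KK - 1))"
    using cr by (simp add: correct_iff)
  show ?thesis unfolding correct_iff
    using m1 m2 p1 p2 l1 l2 cc ru K_ge3 by (smt (verit))
qed

definition bad where "bad r u w \<longleftrightarrow> 0 \<le> r u \<and> 0 \<le> r w \<and> \<not> correct V E r u w"

lemma bad_back:
  assumes c: "is_config V E r" and st: "step_did V E r S r'" and e: "E u w"
    and bd: "bad r' u w"
  shows "bad r u w"
proof (rule ccontr)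
  assume nb: "\<not> bad r u w"
  have uv: "u \<in> V" "w \<in> V" using edgeV e by auto
  have nn: "0 \<le> r' u" "0 \<le> r' w" "\<not> correct V E r' u w" using bd by (auto simp: bad_def)
  have zero_stay: "r' y = 0" if y: "y \<in> V" "r y = 0" and ex: "E y x" "r x < 0" for x y
  proof (cases "y \<in> S")
    case True
    from step_move[OF st True] y ex show ?thesis
      by (auto simp: reInit_def etapeConv_def etapeNorm_def correct_def dest: tc_nb)
  next
    case False then show ?thesis using step_stay[OF st False] y by simp
  qed
  have cor00: "correct V E r' u w" if "r' u = 0" "r' w = 0" using that K_ge3 by (simp add: correct_iff)
  have key: "False" if e1: "E x y" and x: "x \<in> V" "y \<in> V" and neg: "r x < 0" and nx: "0 \<le> r' x" "0 \<le> r' y"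
     and ncr: "\<not> correct V E r' x y" for x y
  proof -
    from up_step[OF c st x(1) neg] nx have ux: "r' x = r x + 1" "r x \<le> r y" "r y \<le> 0"
      using e1 neg by auto
    have cy: "- NN \<le> r y" "r y < KK" using cfg[OF c x(2)] by auto
    have rx: "r' x = 0" "r x = -1" using ux neg nx by auto
    show False
    proof (cases "r y < 0")
      case True
      from up_step[OF c st x(2) True] nx have "r' y = r y + 1" by auto
      then have "r' y = 0" using rx ux True by auto
      then show False using ncr rx K_ge3 by (simp add: correct_iff)
    next
      case False
      then have "r y = 0" using ux by auto
      then have "r' y = 0" using zero_stay[of y x] esym[OF e1] neg x by auto
      then show False using ncr rx K_ge3 by (simp add: correct_iff)
    qed
  qed
  show False
  proof (cases "r u < 0")
    case True then show False using key[of u w] e uv nn by auto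
  next
    case False
    show False
    proof (cases "r w < 0")
      case True
      have "\<not> correct V E r' w u" using nn(3) by (auto simp: correct_iff)
      then show False using key[of w u] esym[OF e] uv nn True by auto
    next
      case False
      then have "correct V E r u w" using nb \<open>\<not> r u < 0\<close> by (auto simp: bad_def)
      then show False using correct_persist[OF c st e _ nn(1,2)] nn(3) by auto
    qed
  qed
qed


definition legit where "legit r \<longleftrightarrow> (\<forall>v\<in>V. 0 \<le> r v \<and> r v < KK \<and> (\<forall>u. E v u \<longrightarrow> correct V E r v u))"

lemma correct_sym: "correct V E r v u \<longleftrightarrow> correct V E r u v"
  by (auto simp: correct_iff)

lemma correct_dvd: "correct V E r c b \<Longrightarrow> \<exists>e. \<bar>e\<bar> \<le> 1 \<and> KK dvd (r b - r c - e)"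
proof -
  assume "correct V E r c b"
  then have "r c = r b \<or> r c = r b + 1 \<or> r b = r c + 1 \<or> (r c = 0 \<and> r b = KK - 1) \<or> (r b = 0 \<and> r c = KK - 1)"
    by (simp add: correct_iff)
  then show ?thesis
  proof (elim disjE)
    assume "r c = r b" then show ?thesis by (intro exI[of _ 0]) auto
  next
    assume "r c = r b + 1" then show ?thesis by (intro exI[of _ "-1"]) auto
  next
    assume "r b = r c + 1" then show ?thesis by (intro exI[of _ "1"]) auto
  next
    assume "r c = 0 \<and> r b = KK - 1"
    then have "r b - r c - (-1) = KK" by simp
    then show ?thesis by (intro exI[of _ "-1"]) auto
  next
    assume "r b = 0 \<and> r c = KK - 1"
    then have "r b - r c - 1 = - KK" by simp
    then show ?thesis by (intro exI[of _ "1"]) auto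
  qed
qed

lemma path_dvd:
  assumes lg: "legit r" shows "a \<in> V \<Longrightarrow> (E ^^ k) a b \<Longrightarrow> \<exists>d. \<bar>d\<bar> \<le> int k \<and> KK dvd (r b - r a - d)"
proof (induction k arbitrary: b)
  case 0
  then show ?case by (auto elim: relpowp_0_E intro: exI[of _ 0])
next
  case (Suc k)
  from Suc.prems(2) obtain c where c: "(E ^^ k) a c" "E c b" by (auto elim: relpowp_Suc_E)
  from Suc.IH[OF Suc.prems(1) c(1)] obtain d where d: "\<bar>d\<bar> \<le> int k" "KK dvd (r c - r a - d)" by auto
  have "c \<in> V" using edgeV c(2) by auto
  then have "correct V E r c b" using lg c(2) by (auto simp: legit_def)
  from correct_dvd[OF this] obtain e where e: "\<bar>e\<bar> \<le> 1" "KK dvd (r b - r c - e)" by auto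
  have "KK dvd ((r c - r a - d) + (r b - r c - e))" using dvd_add[OF d(2) e(2)] .
  moreover have "(r c - r a - d) + (r b - r c - e) = r b - r a - (d + e)" by simp
  ultimately have "KK dvd (r b - r a - (d + e))" by metis
  then show ?case using d e by (intro exI[of _ "d + e"]) auto
qed

lemma gdist_path: assumes "a \<in> V" "b \<in> V" shows "(E ^^ gdist E a b) a b"
proof -
  from rtranclp_imp_relpowp[OF econn[OF assms]] obtain k where "(E ^^ k) a b" ..
  then show ?thesis unfolding gdist_def by (rule LeastI)
qed

lemma gdist_le: assumes "a \<in> V" "b \<in> V" shows "gdist E a b \<le> DD"
proof -
  have "finite {gdist E u v | u v. u \<in> V \<and> v \<in> V}" using finV by (intro finite_image_set2) auto
  moreover have "gdist E a b \<in> {gdist E u v | u v. u \<in> V \<and> v \<in> V}" using assms by blast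
  ultimately show ?thesis unfolding diam_def by (rule Max_ge)
qed

lemma legit_close: "legit r \<Longrightarrow> a \<in> V \<Longrightarrow> b \<in> V \<Longrightarrow> \<exists>d. \<bar>d\<bar> \<le> int DD \<and> KK dvd (r b - r a - d)"
  using path_dvd[of r a "gdist E a b" b] gdist_path[of a b] gdist_le[of a b] by force

lemma dvd_small: "(K::int) > 0 \<Longrightarrow> K dvd x \<Longrightarrow> \<bar>x\<bar> < K \<Longrightarrow> x = 0"
proof -
  assume a: "K > 0" "K dvd x" "\<bar>x\<bar> < K"
  then obtain q where q: "x = K * q" by (auto simp: dvd_def)
  show "x = 0"
  proof (rule ccontr)
    assume "x \<noteq> 0"
    then have "\<bar>q\<bar> \<ge> 1" using q by auto
    then have "K * 1 \<le> K * \<bar>q\<bar>" using a by (intro mult_left_mono) auto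
    then show False using a q by (simp add: abs_mult)
  qed
qed

lemma ex_min_on: "finite S \<Longrightarrow> S \<noteq> {} \<Longrightarrow> \<exists>x\<in>S. \<forall>y\<in>S. (f x :: int) \<le> f y"
proof -
  assume a: "finite S" "S \<noteq> {}"
  have "Min (f ` S) \<in> f ` S" using a by (intro Min_in) auto
  then obtain x where x: "x \<in> S" "f x = Min (f ` S)" by auto
  have "\<forall>y\<in>S. f x \<le> f y" using x a by auto
  then show ?thesis using x(1) by blast
qed

lemma card2: "u \<in> V \<Longrightarrow> v \<in> V \<Longrightarrow> u \<noteq> v \<Longrightarrow> NN \<ge> 2"
proof -
  assume a: "u \<in> V" "v \<in> V" "u \<noteq> v"
  have "card {u, v} \<le> card V" using a finV by (intro card_mono) auto
  then show ?thesis using a by (simp add: nproc_def)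
qed

lemma legit_enabled:
  assumes lg: "legit r" shows "\<exists>v\<in>V. etapeNorm V E r v"
proof (cases "\<exists>v\<in>V. \<forall>u. \<not> E v u")
  case True
  then show ?thesis by (auto simp: etapeNorm_def tousCorrects_def vois_def)
next
  case False
  obtain v0 where v0: "v0 \<in> V" using Vne by auto
  then obtain u0 where "E v0 u0" using False by auto
  then have N2: "NN \<ge> 2" using card2[of v0 u0] eirr edgeV by metis
  have Kb: "2 * int DD + 1 < KK"
  proof -
    have "3 * (int DD + 1) \<le> (2 * NN - 1) * (int DD + 1)" using N2 by (intro mult_right_mono) auto
    then have "3 * int DD + 3 \<le> (2 * NN - 1) * (int DD + 1)" by simp
    moreover have "int DD \<ge> 0" by simp
    ultimately show ?thesis using K_eq by linarith
  qed
  define s where "s v = (SOME d. \<bar>d\<bar> \<le> int DD \<and> KK dvd (r v - r v0 - d))" for v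
  have s: "\<bar>s v\<bar> \<le> int DD \<and> KK dvd (r v - r v0 - s v)" if "v \<in> V" for v
    unfolding s_def using legit_close[OF lg v0 that] by (rule someI_ex)
  obtain v where v: "v \<in> V" "\<forall>y\<in>V. s v \<le> s y" using ex_min_on[OF finV Vne] by blast
  have "etapeNorm V E r v" unfolding etapeNorm_def tousCorrects_def
  proof (intro conjI ballI)
    fix u assume "u \<in> vois E v"
    then have e: "E v u" by (simp add: vois_def)
    then show "correct V E r v u" using lg v by (auto simp: legit_def)
    then obtain e where ee: "\<bar>e\<bar> \<le> 1" "KK dvd (r u - r v - e)" using correct_dvd by blast
    have u: "u \<in> V" using edgeV e by auto
    have "KK dvd ((r u - r v - e) - (r u - r v0 - s u) + (r v - r v0 - s v))"
      using dvd_add[OF dvd_diff[OF ee(2) conjunct2[OF s[OF u]]] conjunct2[OF s[OF v(1)]]] .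
    moreover have "(r u - r v - e) - (r u - r v0 - s u) + (r v - r v0 - s v) = s u - s v - e" by simp
    ultimately have "KK dvd (s u - s v - e)" by metis
    moreover have "\<bar>s u - s v - e\<bar> < KK" using s[OF u] s[OF v(1)] ee Kb by linarith
    ultimately have "s u - s v - e = 0" using dvd_small[of KK "s u - s v - e"] K_ge3 by linarith
    moreover have "s v \<le> s u" using v(2) u by auto
    ultimately have e0: "0 \<le> e" "e \<le> 1" using ee by linarith+
    have b: "0 \<le> r v" "r v < KK" "0 \<le> r u" "r u < KK" using lg u v by (auto simp: legit_def)
    obtain q where q: "r u - r v - e = KK * q" using ee by (auto simp: dvd_def)
    have "KK * q < KK * 1" using q b e0 by linarith
    then have q1: "q < 1" using K_ge3 by (subst (asm) mult_less_cancel_left_pos) auto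
    have "KK * (-2) < KK * q" using q b e0 by linarith
    then have q2: "-2 < q" using K_ge3 by (subst (asm) mult_less_cancel_left_pos) auto
    have "q = 0 \<or> q = -1" using q1 q2 by arith
    then have "r u = r v + e \<or> r u = r v + e - KK" using q by auto
    then have "r u = r v \<or> r u = r v + 1 \<or> (r v = KK - 1 \<and> r u = 0)" using b e0 by arith
    then show "le_l KK (r v) (r u)" using le_l_iff[OF b] by blast
  qed
  then show ?thesis using v by auto
qed


lemma K_eq2: "KK = 2 * NN * int DD + 2 * NN - int DD + 1"
  by (simp add: K_eq algebra_simps)

lemma legit_config: "legit r \<Longrightarrow> is_config V E r"
  using n_pos by (auto simp: legit_def is_config_def)

lemma legit_tc: "legit r \<Longrightarrow> v \<in> V \<Longrightarrow> tousCorrects V E r v"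
  by (auto simp: legit_def tousCorrects_def vois_def)

lemma priv_bounds:
  assumes bij: "bij_betw ident V {0..<nproc V}" and v: "v \<in> V"
  shows "0 \<le> 2 * NN + 2 * int DD * int (ident v) \<and> 2 * NN + 2 * int DD * int (ident v) < KK"
proof -
  have "ident v < nproc V" using bij v by (auto simp: bij_betw_def)
  then have "int (ident v) \<le> NN - 1" by simp
  then have "2 * int DD * int (ident v) \<le> 2 * int DD * (NN - 1)" by (intro mult_left_mono) auto
  moreover have "2 * int DD * (NN - 1) = 2 * NN * int DD - 2 * int DD" by (simp add: algebra_simps)
  moreover have "0 \<le> 2 * int DD * int (ident v)" by simp
  ultimately show ?thesis using K_eq2 n_pos by linarith
qed

lemma safety:
  assumes lg: "legit r" and bij: "bij_betw ident V {0..<nproc V}" and uv: "u \<in> V" "v \<in> V"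
    and pu: "privilege V E ident r u" and pv: "privilege V E ident r v"
  shows "u = v"
proof (rule ccontr)
  assume ne: "u \<noteq> v"
  have "gdist E u v \<noteq> 0" using gdist_path[OF uv] ne by (metis relpowp_0_E)
  then have D1: "int DD \<ge> 1" using gdist_le[OF uv] by linarith
  obtain d where d: "\<bar>d\<bar> \<le> int DD" "KK dvd (r v - r u - d)" using legit_close[OF lg uv] by auto
  define k where "k = int (ident v) - int (ident u)"
  have k0: "k \<noteq> 0" using bij uv ne by (auto simp: k_def bij_betw_def inj_on_def)
  have "ident v < nproc V" "ident u < nproc V" using bij uv by (auto simp: bij_betw_def)
  then have kb: "\<bar>k\<bar> \<le> NN - 1" by (auto simp: k_def)
  have rvu: "r v - r u = 2 * int DD * k" using pu pv by (simp add: privilege_def k_def algebra_simps)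
  have a1: "2 * int DD * \<bar>k\<bar> \<le> 2 * int DD * (NN - 1)" using kb by (intro mult_left_mono) auto
  have a2: "2 * int DD * 1 \<le> 2 * int DD * \<bar>k\<bar>" using k0 by (intro mult_left_mono) auto
  have a3: "\<bar>2 * int DD * k\<bar> = 2 * int DD * \<bar>k\<bar>" by (simp add: abs_mult)
  have a4: "2 * int DD * (NN - 1) = 2 * NN * int DD - 2 * int DD" by (simp add: algebra_simps)
  have "\<bar>2 * int DD * k - d\<bar> < KK" using a1 a3 a4 d(1) K_eq2 n_pos by linarith
  moreover have "KK dvd (2 * int DD * k - d)" using d(2) rvu by simp
  ultimately have "2 * int DD * k - d = 0" using dvd_small[of KK "2 * int DD * k - d"] K_ge3 by auto
  then show False using a2 a3 d(1) D1 by linarith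
qed

lemma no_deadlock:
  assumes c: "is_config V E r" shows "\<exists>v\<in>V. enabled V E r v"
proof (rule ccontr)
  assume ne: "\<not> (\<exists>v\<in>V. enabled V E r v)"
  have nb: "\<exists>u. E v u" if "v \<in> V" for v
    using ne that by (auto simp: enabled_def etapeNorm_def tousCorrects_def vois_def)
  have nre: "tousCorrects V E r v \<or> r v \<le> 0" if "v \<in> V" for v
    using ne that cfg[OF c that] by (auto simp: enabled_def reInit_def)
  show False
  proof (cases "\<forall>v\<in>V. tousCorrects V E r v")
    case True
    have "legit r" unfolding legit_def
    proof (intro ballI conjI allI impI)
      fix v assume v: "v \<in> V"
      obtain u where "E v u" using nb[OF v] by auto
      then have "correct V E r v u" using True v tc_nb by blast
      then show "0 \<le> r v" "r v < KK" by (auto simp: correct_def)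
      fix u assume "E v u" then show "correct V E r v u" using True v tc_nb by auto
    qed
    then show False using legit_enabled ne by (auto simp: enabled_def)
  next
    case False
    then obtain x where x: "x \<in> V" "\<not> tousCorrects V E r x" by auto
    then have x0: "r x \<le> 0" using nre by auto
    define I where "I = {v\<in>V. r v \<le> 0}"
    have "finite I" "I \<noteq> {}" using finV x x0 by (auto simp: I_def)
    then obtain v where v: "v \<in> I" "\<forall>y\<in>I. r v \<le> r y" using ex_min_on[of I r] by blast
    have vV: "v \<in> V" "r v \<le> 0" using v by (auto simp: I_def)
    show False
    proof (cases "r v < 0")
      case True
      have "etapeConv V E r v" unfolding etapeConv_def
      proof (intro conjI ballI)
        show "r v \<in> initS_set V" using True cfg[OF c vV(1)] by auto
        fix u assume "u \<in> vois E v"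
        then have e: "E v u" by (simp add: vois_def)
        have uV: "u \<in> V" using edgeV e by auto
        have "r u \<le> 0"
        proof (rule ccontr)
          assume "\<not> r u \<le> 0"
          moreover have "\<not> correct V E r u v" using True by (auto simp: correct_def)
          then have "\<not> tousCorrects V E r u" using esym[OF e] tc_nb by blast
          ultimately show False using ne uV by (auto simp: enabled_def reInit_def)
        qed
        then have "u \<in> I" using uV by (auto simp: I_def)
        then show "r u \<in> init_set V" "r v \<le> r u" using v(2) cfg[OF c uV] \<open>r u \<le> 0\<close> by auto
      qed
      then show False using ne vV by (auto simp: enabled_def)
    next
      case False
      then have allnn: "\<forall>y\<in>V. 0 \<le> r y" using v(2) vV by (force simp: I_def)
      obtain u where u: "E x u" "\<not> correct V E r x u" using x(2) by (auto simp: tousCorrects_def vois_def)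
      have uV: "u \<in> V" using edgeV u(1) by auto
      have rx: "r x = 0" using x0 allnn x by auto
      have "r u > 0" using u(2) rx allnn uV cfg[OF c uV] K_ge3 by (auto simp: correct_iff)
      moreover have "\<not> tousCorrects V E r u" using u correct_sym esym tc_nb by blast
      ultimately show False using ne uV by (auto simp: enabled_def reInit_def)
    qed
  qed
qed

lemma step_exists:
  assumes v: "v \<in> V" "enabled V E r v"
  shows "step_did V E r {v} (r(v := (if reInit V E r v then - NN else phi V E (r v))))"
  using v by (auto simp: step_did_def action_results_def enabled_def reInit_def etapeNorm_def)

lemma legit_step:
  assumes lg: "legit r" and st: "step_did V E r S r'"
  shows "legit r'"
proof -
  have c: "is_config V E r" using legit_config[OF lg] .
  have nn: "0 \<le> r' v \<and> r' v < KK" if v: "v \<in> V" for v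
  proof (cases "v \<in> S")
    case True
    have b: "0 \<le> r v" "r v < KK" using lg v by (auto simp: legit_def)
    have "\<not> reInit V E r v" using legit_tc[OF lg v] by (simp add: reInit_def)
    moreover have "\<not> etapeConv V E r v" using b by (simp add: etapeConv_def)
    ultimately have "r' v = phi V E (r v)" using step_move[OF st True] by auto
    then show ?thesis using phi_pos[OF b] K_ge3 b by auto
  next
    case False then show ?thesis using step_stay[OF st False] lg v by (auto simp: legit_def)
  qed
  show ?thesis unfolding legit_def
  proof (intro ballI conjI allI impI)
    fix v assume v: "v \<in> V"
    show "0 \<le> r' v" "r' v < KK" using nn[OF v] by auto
    fix u assume e: "E v u"
    have "correct V E r v u" using lg v e by (auto simp: legit_def)
    then show "correct V E r' v u" using correct_persist[OF c st e] nn edgeV[OF e] by auto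
  qed
qed


lemma pot_arith:
  fixes K x c :: int
  assumes K: "K \<ge> 3" and b: "0 \<le> x" "x < K" "0 \<le> c" "c < K"
    and l: "c = x \<or> c = x + 1 \<or> (x = K - 1 \<and> c = 0)"
  defines "pf \<equiv> \<lambda>y. (let g = (c - y) mod K in if g = 1 then 2 else if g = 0 then 1 else (0::nat))"
  shows "pf (if x = K - 1 then 0 else x + 1) < pf x"
  using l b K unfolding pf_def Let_def by (auto simp: modK)

lemma mod_step_arith:
  fixes K x p :: int
  assumes K: "K \<ge> 3" and b: "0 \<le> x" "x < K" "0 \<le> p" "p < K" and ne: "p \<noteq> x"
  shows "(p - (if x = K - 1 then 0 else x + 1)) mod K = (p - x) mod K - 1 \<and> (p - x) mod K > 0"
  using b K ne by (auto simp: modK)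

end

lemma crossing:
  fixes f :: "nat \<Rightarrow> int"
  shows "f a < L \<Longrightarrow> L \<le> f b \<Longrightarrow> a \<le> b \<Longrightarrow> \<exists>i. a \<le> i \<and> i < b \<and> f i < L \<and> L \<le> f (Suc i)"
proof (induction b)
  case 0 then show ?case by auto
next
  case (Suc b)
  show ?case
  proof (cases "L \<le> f b")
    case True
    then have "a \<le> b" using Suc.prems by (cases "a = Suc b") auto
    then show ?thesis using Suc.IH[OF Suc.prems(1) True] by (metis less_Suc_eq)
  next
    case False
    then show ?thesis using Suc.prems by (intro exI[of _ b]) (auto simp: le_Suc_eq)
  qed
qed

lemma last_time:
  fixes P :: "nat \<Rightarrow> bool"
  shows "P a \<Longrightarrow> \<not> P b \<Longrightarrow> a < b \<Longrightarrow> \<exists>i. a \<le> i \<and> i < b \<and> P i \<and> (\<forall>j. i < j \<and> j \<le> b \<longrightarrow> \<not> P j)"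
proof (induction b)
  case 0 then show ?case by auto
next
  case (Suc b)
  show ?case
  proof (cases "P b")
    case True
    then show ?thesis using Suc.prems by (intro exI[of _ b]) (auto simp: le_Suc_eq)
  next
    case False
    then have "a < b" using Suc.prems by (metis less_Suc_eq)
    from Suc.IH[OF Suc.prems(1) False this] obtain i where
      "a \<le> i" "i < b" "P i" "\<forall>j. i < j \<and> j \<le> b \<longrightarrow> \<not> P j" by blast
    then show ?thesis using Suc.prems(2) by (intro exI[of _ i]) (auto simp: le_Suc_eq)
  qed
qed

lemma antimono_from:
  fixes p :: "nat \<Rightarrow> nat"
  assumes "\<forall>i\<ge>T. p (Suc i) \<le> p i"
  shows "T \<le> j \<Longrightarrow> j \<le> i \<Longrightarrow> p i \<le> p j"
proof (induction i)
  case 0 then show ?case by auto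
next
  case (Suc i)
  then show ?case using assms by (cases "j = Suc i") (auto simp: le_Suc_eq intro: order_trans)
qed

locale Ex = G V E for V :: "'v set" and E +
  fixes \<sigma> :: "nat \<Rightarrow> 'v \<Rightarrow> int" and A :: "nat \<Rightarrow> 'v set"
  assumes steps: "\<And>i. step_did V E (\<sigma> i) (A i) (\<sigma> (Suc i))"
    and cfg0: "is_config V E (\<sigma> 0)"
begin

lemma cfgi: "is_config V E (\<sigma> i)"
  by (induction i) (use cfg0 step_config steps in auto)

lemma A_ne: "A i \<noteq> {}" using steps[of i] by (simp add: step_did_def)
lemma A_sub: "A i \<subseteq> V" using steps[of i] by (auto simp: step_did_def)
lemma stay: "v \<notin> A i \<Longrightarrow> \<sigma> (Suc i) v = \<sigma> i v" using step_stay[OF steps] .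

definition moves_fin where "moves_fin v \<longleftrightarrow> (\<exists>T. \<forall>i\<ge>T. v \<notin> A i)"

lemma pot_fin:
  fixes p :: "nat \<Rightarrow> nat"
  assumes mono: "\<forall>i\<ge>T. p (Suc i) \<le> p i" and dec: "\<forall>i\<ge>T. v \<in> A i \<longrightarrow> p (Suc i) < p i"
  shows "moves_fin v"
proof (rule ccontr)
  assume "\<not> moves_fin v"
  then have inf: "\<forall>N. \<exists>i\<ge>N. v \<in> A i" by (auto simp: moves_fin_def)
  have "\<exists>j\<ge>T. p j + k \<le> p T" for k
  proof (induction k)
    case 0 then show ?case by auto
  next
    case (Suc k)
    then obtain j where j: "j \<ge> T" "p j + k \<le> p T" by auto
    obtain i where i: "i \<ge> j" "v \<in> A i" using inf by auto
    have "p i \<le> p j" using antimono_from[OF mono j(1) i(1)] .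
    moreover have "p (Suc i) < p i" using dec i j by auto
    ultimately show ?case using j i by (intro exI[of _ "Suc i"]) auto
  qed
  from this[of "Suc (p T)"] show False by auto
qed

lemma frozen:
  assumes "moves_fin w" shows "\<exists>T c. \<forall>i\<ge>T. \<sigma> i w = c"
proof -
  obtain T where T: "\<forall>i\<ge>T. w \<notin> A i" using assms by (auto simp: moves_fin_def)
  have "\<sigma> i w = \<sigma> T w" if "i \<ge> T" for i
    using that
  proof (induction i)
    case 0 then show ?case by auto
  next
    case (Suc i)
    then show ?case using T stay by (cases "Suc i = T") (auto simp: le_Suc_eq)
  qed
  then show ?thesis by blast
qed

definition NAphase where "NAphase T0 \<longleftrightarrow> (\<forall>i\<ge>T0. \<forall>v\<in>A i. etapeNorm V E (\<sigma> i) v \<and> \<sigma> (Suc i) v = phi V E (\<sigma> i v))"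

lemma prop_fin:
  assumes na: "NAphase T0" and e: "E u w" and fw: "moves_fin w"
  shows "moves_fin u"
proof -
  obtain T1 c where T1: "\<forall>i\<ge>T1. \<sigma> i w = c" using frozen[OF fw] by auto
  define T where "T = max T0 T1"
  define pf where "pf \<equiv> \<lambda>y. (let g = (c - y) mod KK in if g = 1 then 2 else if g = 0 then 1 else (0::nat))"
  define p where "p i = pf (\<sigma> i u)" for i
  have dec: "p (Suc i) < p i" if i: "i \<ge> T" "u \<in> A i" for i
  proof -
    have en: "etapeNorm V E (\<sigma> i) u" "\<sigma> (Suc i) u = phi V E (\<sigma> i u)" using na i by (auto simp: NAphase_def T_def)
    have cw: "\<sigma> i w = c" using T1 i by (auto simp: T_def)
    have "correct V E (\<sigma> i) u w" using en e by (auto simp: etapeNorm_def dest: tc_nb)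
    then have b: "0 \<le> \<sigma> i u" "\<sigma> i u < KK" "0 \<le> c" "c < KK" using cw by (auto simp: correct_def)
    have "le_l KK (\<sigma> i u) c" using en e cw by (auto simp: etapeNorm_def vois_def)
    then have l: "c = \<sigma> i u \<or> c = \<sigma> i u + 1 \<or> (\<sigma> i u = KK - 1 \<and> c = 0)" using le_l_iff b by auto
    have "\<sigma> (Suc i) u = (if \<sigma> i u = KK - 1 then 0 else \<sigma> i u + 1)" using en phi_pos b by auto
    then show ?thesis using pot_arith[OF K_ge3 b l] unfolding p_def pf_def by simp
  qed
  have mono: "p (Suc i) \<le> p i" if i: "i \<ge> T" for i
    using dec[OF i] stay[of u i] by (cases "u \<in> A i") (auto simp: p_def)
  show ?thesis using pot_fin[of T p u] dec mono by auto
qed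

lemma allmove:
  assumes na: "NAphase T0" shows "v \<in> V \<Longrightarrow> \<not> moves_fin v"
proof
  assume v: "v \<in> V" and f: "moves_fin v"
  have "moves_fin y" if "E\<^sup>*\<^sup>* v y" for y
    using that
  proof (induction rule: rtranclp_induct)
    case base then show ?case using f .
  next
    case (step y z) then show ?case using prop_fin[OF na esym[OF step(2)]] by auto
  qed
  then have all: "\<forall>y\<in>V. moves_fin y" using econn v by auto
  define Tf where "Tf y = (SOME T. \<forall>i\<ge>T. y \<notin> A i)" for y
  have Tf: "\<forall>i\<ge>Tf y. y \<notin> A i" if "y \<in> V" for y
  proof -
    from all that obtain T where "\<forall>i\<ge>T. y \<notin> A i" by (auto simp: moves_fin_def)
    then show ?thesis unfolding Tf_def by (rule someI)
  qed
  define T where "T = Max (Tf ` V)"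
  have "\<forall>y\<in>V. y \<notin> A T"
  proof
    fix y assume y: "y \<in> V"
    have "Tf y \<le> T" using y finV by (auto simp: T_def)
    then show "y \<notin> A T" using Tf[OF y] by auto
  qed
  then show False using A_ne[of T] A_sub[of T] by auto
qed


lemma legit_all: "legit (\<sigma> 0) \<Longrightarrow> legit (\<sigma> i)"
  by (induction i) (use legit_step steps in auto)

lemma legit_NA: assumes lg: "legit (\<sigma> 0)" shows "NAphase 0"
  unfolding NAphase_def
proof (intro allI impI ballI)
  fix i v assume v: "v \<in> A i"
  have vV: "v \<in> V" using A_sub v by auto
  have l: "legit (\<sigma> i)" using legit_all[OF lg] .
  have "\<not> reInit V E (\<sigma> i) v" using legit_tc[OF l vV] by (simp add: reInit_def)
  moreover have "\<not> etapeConv V E (\<sigma> i) v" using l vV by (auto simp: etapeConv_def legit_def)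
  ultimately show "etapeNorm V E (\<sigma> i) v \<and> \<sigma> (Suc i) v = phi V E (\<sigma> i v)"
    using step_move[OF steps v] by auto
qed

lemma first_move:
  assumes "\<not> moves_fin v"
  shows "\<exists>j\<ge>N. v \<in> A j \<and> \<sigma> j v = \<sigma> N v"
proof -
  have ex: "\<exists>j. j \<ge> N \<and> v \<in> A j" using assms by (auto simp: moves_fin_def)
  define j where "j = (LEAST j. j \<ge> N \<and> v \<in> A j)"
  have j: "j \<ge> N" "v \<in> A j" using LeastI_ex[OF ex] by (auto simp: j_def)
  have nm: "v \<notin> A k" if "N \<le> k" "k < j" for k using not_less_Least[of k "\<lambda>j. j \<ge> N \<and> v \<in> A j"] that by (auto simp: j_def)
  have "\<sigma> (N + d) v = \<sigma> N v" if "N + d \<le> j" for d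
    using that
  proof (induction d)
    case 0 then show ?case by simp
  next
    case (Suc d) then show ?case using nm[of "N + d"] stay[of v "N + d"] by auto
  qed
  from this[of "j - N"] j show ?thesis by (intro exI[of _ j]) auto
qed

lemma hit:
  assumes lg: "legit (\<sigma> 0)" and v: "v \<in> V" and p: "0 \<le> p" "p < KK"
  shows "\<exists>i\<ge>N. v \<in> A i \<and> \<sigma> i v = p"
proof -
  have nf: "\<not> moves_fin v" using allmove[OF legit_NA[OF lg] v] .
  have "\<forall>N. nat ((p - \<sigma> N v) mod KK) = m \<longrightarrow> (\<exists>i\<ge>N. v \<in> A i \<and> \<sigma> i v = p)" for m
  proof (induction m)
    case 0
    show ?case
    proof (intro allI impI)
      fix N assume m: "nat ((p - \<sigma> N v) mod KK) = 0"
      obtain j where j: "j \<ge> N" "v \<in> A j" "\<sigma> j v = \<sigma> N v" using first_move[OF nf] by blast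
      have b: "0 \<le> \<sigma> j v" "\<sigma> j v < KK" using legit_all[OF lg] v by (auto simp: legit_def)
      have "\<sigma> j v = p" using mod_step_arith[OF K_ge3 b p] m j(3) by force
      then show "\<exists>i\<ge>N. v \<in> A i \<and> \<sigma> i v = p" using j by auto
    qed
  next
    case (Suc m)
    show ?case
    proof (intro allI impI)
      fix N assume m: "nat ((p - \<sigma> N v) mod KK) = Suc m"
      obtain j where j: "j \<ge> N" "v \<in> A j" "\<sigma> j v = \<sigma> N v" using first_move[OF nf] by blast
      have b: "0 \<le> \<sigma> j v" "\<sigma> j v < KK" using legit_all[OF lg] v by (auto simp: legit_def)
      show "\<exists>i\<ge>N. v \<in> A i \<and> \<sigma> i v = p"
      proof (cases "\<sigma> j v = p")
        case True then show ?thesis using j by auto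
      next
        case False
        have nx: "\<sigma> (Suc j) v = (if \<sigma> j v = KK - 1 then 0 else \<sigma> j v + 1)"
          using legit_NA[OF lg] j(2) phi_pos b by (auto simp: NAphase_def)
        have "nat ((p - \<sigma> (Suc j) v) mod KK) = m"
          using mod_step_arith[OF K_ge3 b p False[symmetric]] nx m j(3) by auto
        then obtain i where "i \<ge> Suc j" "v \<in> A i" "\<sigma> i v = p" using Suc.IH by blast
        then show ?thesis using j by (intro exI[of _ i]) auto
      qed
    qed
  qed
  then show ?thesis by blast
qed

lemma legit_spec:
  assumes lg: "legit (\<sigma> 0)" and bij: "bij_betw ident V {0..<nproc V}"
  shows "spec_EM V E ident \<sigma> A \<infinity>"
  unfolding spec_EM_def
proof (intro conjI allI impI ballI)
  fix i u v assume "u \<in> V" "v \<in> V" "privilege V E ident (\<sigma> i) u \<and> privilege V E ident (\<sigma> i) v"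
  then show "u = v" using safety[OF legit_all[OF lg] bij] by auto
next
  fix v assume v: "v \<in> V"
  define p where "p = 2 * NN + 2 * int DD * int (ident v)"
  have pb: "0 \<le> p" "p < KK" using priv_bounds[OF bij v] by (auto simp: p_def)
  have "\<forall>N. \<exists>i\<ge>N. i \<in> {i. enat i < \<infinity> \<and> v \<in> A i \<and> privilege V E ident (\<sigma> i) v}"
    using hit[OF lg v pb] by (auto simp: privilege_def p_def)
  then show "infinite {i. enat i < \<infinity> \<and> v \<in> A i \<and> privilege V E ident (\<sigma> i) v}"
    using infinite_nat_iff_unbounded_le by blast
qed


definition Ev where "Ev = {(t, u). u \<in> A t \<and> reInit V E (\<sigma> t) u}"

lemma ev_facts:
  assumes "(t, u) \<in> Ev"
  shows "u \<in> V \<and> 0 < \<sigma> t u \<and> \<sigma> (Suc t) u = - NN \<and> \<not> tousCorrects V E (\<sigma> t) u"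
proof -
  have a: "u \<in> A t" "reInit V E (\<sigma> t) u" using assms by (auto simp: Ev_def)
  have u: "u \<in> V" using a A_sub by auto
  have p: "0 < \<sigma> t u" using a(2) cfg[OF cfgi u] by (auto simp: reInit_def)
  have "\<sigma> (Suc t) u = - NN" using step_move[OF steps a(1)] a(2) p
    by (auto simp: reInit_def etapeNorm_def etapeConv_def)
  then show ?thesis using u p a(2) by (auto simp: reInit_def)
qed

lemma cross_nb:
  assumes u: "u \<in> V" and L: "\<sigma> a u < L" "L \<le> \<sigma> b u" "L \<le> 1" "a \<le> b"
  shows "\<exists>j. a \<le> j \<and> j < b \<and> \<sigma> j u = L - 1 \<and> (\<forall>x. E u x \<longrightarrow> \<sigma> j u \<le> \<sigma> j x \<and> (\<sigma> j u < 0 \<longrightarrow> \<sigma> j x \<le> 0))"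
proof -
  obtain j where j: "a \<le> j" "j < b" "\<sigma> j u < L" "L \<le> \<sigma> (Suc j) u"
    using crossing[of "\<lambda>i. \<sigma> i u" a L b] L by auto
  from up_step[OF cfgi steps u j(3,4) L(3)] j show ?thesis by (intro exI[of _ j]) auto
qed

definition C where "C e' e \<longleftrightarrow> E (snd e') (snd e) \<and> fst e' < fst e \<and>
   (\<forall>i. fst e' < i \<and> i \<le> fst e \<longrightarrow> \<sigma> i (snd e') < 0 \<and> 0 < \<sigma> i (snd e))"

definition rootI where "rootI u w = {e. e \<in> Ev \<and> snd e = u \<and> E u w \<and> (\<forall>i\<le>fst e. \<sigma> i w < 0)}"
definition rootII where "rootII u w = {e. e \<in> Ev \<and> snd e = u \<and> E u w \<and> bad (\<sigma> (fst e)) u w}"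

lemma classify:
  assumes e: "e \<in> Ev"
  shows "(\<exists>u\<in>V. \<exists>w\<in>V. e \<in> rootI u w \<or> e \<in> rootII u w) \<or> (\<exists>e'\<in>Ev. C e' e)"
proof -
  obtain t u where tu: "e = (t, u)" by (cases e)
  have f: "u \<in> V" "0 < \<sigma> t u" "\<not> tousCorrects V E (\<sigma> t) u" using ev_facts e tu by auto
  then obtain w where w: "E u w" "\<not> correct V E (\<sigma> t) u w" by (auto simp: tousCorrects_def vois_def)
  have wV: "w \<in> V" using edgeV w(1) by auto
  show ?thesis
  proof (cases "0 \<le> \<sigma> t w")
    case True
    then have "bad (\<sigma> t) u w" using f w by (auto simp: bad_def)
    then show ?thesis using e tu w wV f by (auto simp: rootII_def)
  next
    case False
    show ?thesis
    proof (cases "\<forall>i\<le>t. \<sigma> i w < 0")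
      case True
      then show ?thesis using e tu w wV f by (auto simp: rootI_def)
    next
      case False2: False
      then obtain i0 where i0: "i0 \<le> t" "0 \<le> \<sigma> i0 w" by (auto simp: not_less)
      have "i0 < t" using i0 False by (cases "i0 = t") auto
      from last_time[of "\<lambda>i. 0 \<le> \<sigma> i w", OF i0(2) _ this] False obtain i where
        i: "i0 \<le> i" "i < t" "0 \<le> \<sigma> i w" "\<forall>j. i < j \<and> j \<le> t \<longrightarrow> \<not> 0 \<le> \<sigma> j w" by auto
      have "\<sigma> (Suc i) w < 0" using i by auto
      from down_step[OF cfgi steps wV i(3) this] have ev': "(i, w) \<in> Ev" by (auto simp: Ev_def)
      have "C (i, w) (t, u)" unfolding C_def
      proof (simp, intro conjI allI impI)
        show "E w u" using esym[OF w(1)] .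
        show "i < t" using i by simp
        fix j assume j: "i < j \<and> j \<le> t"
        then show "\<sigma> j w < 0" using i by auto
        show "0 < \<sigma> j u"
        proof (rule ccontr)
          assume "\<not> 0 < \<sigma> j u"
          then have "\<sigma> j u < 1" by simp
          from cross_nb[OF f(1) this] f(2) j obtain j' where
            j': "j \<le> j'" "j' < t" "\<sigma> j' u = 0" "\<sigma> j' u \<le> \<sigma> j' w" using w(1) by force
          then show False using i j by auto
        qed
      qed
      then show ?thesis using ev' tu by auto
    qed
  qed
qed

lemma subsingleton_finite: "(\<And>x y. x \<in> S \<Longrightarrow> y \<in> S \<Longrightarrow> x = y) \<Longrightarrow> finite S"
proof (cases "S = {}")
  case False
  assume a: "\<And>x y. x \<in> S \<Longrightarrow> y \<in> S \<Longrightarrow> x = y"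
  then obtain x where "x \<in> S" using False by auto
  then have "S \<subseteq> {x}" using a by auto
  then show ?thesis using finite_subset by auto
qed auto

lemma fst_eq: "e1 \<in> Ev \<Longrightarrow> e2 \<in> Ev \<Longrightarrow> snd e1 = snd e2 \<Longrightarrow>
   (\<And>t1 t2. fst e1 = t1 \<Longrightarrow> fst e2 = t2 \<Longrightarrow> t1 < t2 \<Longrightarrow> False) \<Longrightarrow>
   (\<And>t1 t2. fst e2 = t1 \<Longrightarrow> fst e1 = t2 \<Longrightarrow> t1 < t2 \<Longrightarrow> False) \<Longrightarrow> e1 = e2"
  by (metis linorder_neqE_nat prod_eqI)

lemma after_reset_cross:
  assumes e1: "(t1, u) \<in> Ev" and e2: "(t2, u) \<in> Ev" and lt: "t1 < t2"
  shows "\<exists>j. t1 < j \<and> j < t2 \<and> \<sigma> j u = 0 \<and> (\<forall>x. E u x \<longrightarrow> 0 \<le> \<sigma> j x)"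
proof -
  have f1: "u \<in> V" "\<sigma> (Suc t1) u = - NN" using ev_facts[OF e1] by auto
  have f2: "0 < \<sigma> t2 u" using ev_facts[OF e2] by auto
  have "\<sigma> (Suc t1) u < 1" using f1 n_pos by auto
  from cross_nb[OF f1(1) this, of t2] f2 lt obtain j where
    "Suc t1 \<le> j" "j < t2" "\<sigma> j u = 0" "\<forall>x. E u x \<longrightarrow> \<sigma> j u \<le> \<sigma> j x" by force
  then show ?thesis by (intro exI[of _ j]) auto
qed

lemma pair_neq_cases:
  fixes x y :: "nat \<times> 'b"
  assumes "x \<noteq> y" "snd x = snd y"
  obtains "fst x < fst y" | "fst y < fst x"
proof -
  have "fst x \<noteq> fst y" using assms prod_eqI by blast
  then show thesis using that by (meson linorder_neqE_nat)
qed

lemma rootI_fin: "finite (rootI u w)"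
proof (rule subsingleton_finite)
  fix x y assume x: "x \<in> rootI u w" and y: "y \<in> rootI u w"
  have key: False if a: "a \<in> rootI u w" "b \<in> rootI u w" "fst a < fst b" for a b
  proof -
    obtain t1 t2 where ab: "a = (t1, u)" "b = (t2, u)" using a by (cases a, cases b) (auto simp: rootI_def)
    have ev: "(t1, u) \<in> Ev" "(t2, u) \<in> Ev" "t1 < t2" "E u w" "\<forall>i\<le>t2. \<sigma> i w < 0"
      using a ab by (auto simp: rootI_def)
    from after_reset_cross[OF ev(1,2,3)] obtain j where "j < t2" "\<forall>x. E u x \<longrightarrow> 0 \<le> \<sigma> j x"
      by auto
    then have "0 \<le> \<sigma> j w" "\<sigma> j w < 0" using ev by auto
    then show False by simp
  qed
  show "x = y"
  proof (rule ccontr)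
    assume "x \<noteq> y"
    moreover have "snd x = snd y" using x y by (auto simp: rootI_def)
    ultimately show False using key x y by (metis pair_neq_cases)
  qed
qed

lemma bad_before: "bad (\<sigma> t) u w \<Longrightarrow> E u w \<Longrightarrow> i \<le> t \<Longrightarrow> bad (\<sigma> i) u w"
proof (induction t)
  case 0 then show ?case by auto
next
  case (Suc t)
  then show ?case using bad_back[OF cfgi steps Suc.prems(2) Suc.prems(1)] by (cases "i = Suc t") auto
qed

lemma rootII_fin: "finite (rootII u w)"
proof (rule subsingleton_finite)
  fix x y assume x: "x \<in> rootII u w" and y: "y \<in> rootII u w"
  have key: False if a: "a \<in> rootII u w" "b \<in> rootII u w" "fst a < fst b" for a b
  proof -
    obtain t1 t2 where ab: "a = (t1, u)" "b = (t2, u)" using a by (cases a, cases b) (auto simp: rootII_def)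
    have "bad (\<sigma> (Suc t1)) u w" using bad_before[of t2 u w "Suc t1"] a ab by (auto simp: rootII_def)
    moreover have "\<sigma> (Suc t1) u = - NN" using ev_facts[of t1 u] a ab by (auto simp: rootII_def)
    ultimately show False using n_pos by (auto simp: bad_def)
  qed
  show "x = y"
  proof (rule ccontr)
    assume "x \<noteq> y"
    moreover have "snd x = snd y" using x y by (auto simp: rootII_def)
    ultimately show False using key x y by (metis pair_neq_cases)
  qed
qed

lemma cause_inj:
  assumes "C e' e1" "C e' e2" "e1 \<in> Ev" "e2 \<in> Ev" "snd e1 = snd e2"
  shows "e1 = e2"
proof -
  have key: False if a: "C e' a" "C e' b" "a \<in> Ev" "b \<in> Ev" "snd a = snd b" "fst a < fst b" for a b
  proof -
    obtain t1 t2 u where ab: "a = (t1, u)" "b = (t2, u)" using a by (cases a, cases b) auto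
    have ev: "(t1, u) \<in> Ev" "(t2, u) \<in> Ev" "t1 < t2" using a ab by auto
    have c: "E (snd e') u" "fst e' < t1" "\<forall>i. fst e' < i \<and> i \<le> t2 \<longrightarrow> \<sigma> i (snd e') < 0"
      using a ab by (auto simp: C_def)
    from after_reset_cross[OF ev] obtain j where j: "t1 < j" "j < t2" "\<forall>x. E u x \<longrightarrow> 0 \<le> \<sigma> j x"
      by auto
    have "0 \<le> \<sigma> j (snd e')" using j(3) esym[OF c(1)] by auto
    moreover have "\<sigma> j (snd e') < 0" using c j by auto
    ultimately show False by simp
  qed
  show ?thesis
  proof (rule ccontr)
    assume "e1 \<noteq> e2"
    then show False using assms key[of e1 e2] key[of e2 e1] by (metis pair_neq_cases)
  qed
qed


definition chain where "chain ch m \<longleftrightarrow> (\<forall>j\<le>m. ch j \<in> Ev) \<and> (\<forall>j<m. C (ch j) (ch (Suc j)))"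

lemma chain_C: "chain ch m \<Longrightarrow> j < m \<Longrightarrow> C (ch j) (ch (Suc j))"
  unfolding chain_def by blast
lemma chain_Ev: "chain ch m \<Longrightarrow> j \<le> m \<Longrightarrow> ch j \<in> Ev"
  unfolding chain_def by blast

lemma chain_times: "chain ch m \<Longrightarrow> j \<le> j' \<Longrightarrow> j' \<le> m \<Longrightarrow> fst (ch j) \<le> fst (ch j')"
proof (induction j')
  case 0 then show ?case by auto
next
  case (Suc j')
  show ?case
  proof (cases "j = Suc j'")
    case False
    then have "fst (ch j) \<le> fst (ch j')" using Suc by auto
    moreover have "fst (ch j') < fst (ch (Suc j'))" using Suc.prems by (auto simp: chain_def C_def)
    ultimately show ?thesis by simp
  qed auto
qed

lemma KS:
  assumes ch: "chain ch m" and j: "j < m" and L: "L \<le> 1" "- NN < L"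
    and tau: "fst (ch j) < \<tau>" "L \<le> \<sigma> \<tau> (snd (ch j))"
  shows "\<exists>\<tau>'. fst (ch (Suc j)) < \<tau>' \<and> \<tau>' < \<tau> \<and> L - 1 \<le> \<sigma> \<tau>' (snd (ch (Suc j)))"
proof -
  obtain t w where tw: "ch j = (t, w)" by (cases "ch j")
  obtain t2 w2 where tw2: "ch (Suc j) = (t2, w2)" by (cases "ch (Suc j)")
  have "ch j \<in> Ev" using ch j by (auto simp: chain_def)
  then have ev: "(t, w) \<in> Ev" using tw by simp
  have c: "E w w2" "t < t2" "\<forall>i. t < i \<and> i \<le> t2 \<longrightarrow> \<sigma> i w < 0 \<and> 0 < \<sigma> i w2"
    using ch j tw tw2 unfolding chain_def C_def by auto
  have f: "w \<in> V" "\<sigma> (Suc t) w = - NN" using ev_facts[OF ev] by auto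
  have "\<sigma> (Suc t) w < L" using f L by auto
  from cross_nb[OF f(1) this, of \<tau>] tau tw L obtain j0 where
    j0: "Suc t \<le> j0" "j0 < \<tau>" "\<sigma> j0 w = L - 1" "\<sigma> j0 w \<le> \<sigma> j0 w2" "\<sigma> j0 w < 0 \<longrightarrow> \<sigma> j0 w2 \<le> 0"
    using c(1) by force
  have "t2 < j0"
  proof (rule ccontr)
    assume "\<not> t2 < j0"
    then have "\<sigma> j0 w < 0 \<and> 0 < \<sigma> j0 w2" using c(3) j0(1) by auto
    then show False using j0(5) by auto
  qed
  then show ?thesis using j0 tw2 by (intro exI[of _ j0]) auto
qed

lemma chain_iter:
  assumes ch: "chain ch m" and ab: "a + 2 \<le> b" "b \<le> m" "b \<le> a + nproc V + 2"
    and same: "snd (ch a) = snd (ch b)"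
  shows "k \<le> b - 1 - a \<Longrightarrow> \<exists>\<tau>. fst (ch (a + k)) < \<tau> \<and> \<tau> + k \<le> Suc (fst (ch (b - 1))) \<and> 1 - int k \<le> \<sigma> \<tau> (snd (ch (a + k)))"
proof (induction k)
  case 0
  have b1: "Suc (b - 1) = b" using ab by auto
  have "fst (ch a) \<le> fst (ch (b - 1))" using chain_times[OF ch, of a "b - 1"] ab by auto
  moreover have "b - 1 < m" using ab by auto
  then have "C (ch (b - 1)) (ch (Suc (b - 1)))" using ch by (auto simp: chain_def)
  then have cc: "C (ch (b - 1)) (ch b)" using b1 by simp
  then have "0 < \<sigma> (Suc (fst (ch (b - 1)))) (snd (ch b))" by (auto simp: C_def)
  ultimately show ?case using same by (intro exI[of _ "Suc (fst (ch (b - 1)))"]) auto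
next
  case (Suc k)
  then obtain \<tau> where tau: "fst (ch (a + k)) < \<tau>" "\<tau> + k \<le> Suc (fst (ch (b - 1)))" "1 - int k \<le> \<sigma> \<tau> (snd (ch (a + k)))"
    by auto
  have am: "a + k < m" using Suc.prems ab by auto
  have L: "1 - int k \<le> 1" "- NN < 1 - int k" using Suc.prems ab by auto
  from KS[OF ch am L tau(1) tau(3)] obtain \<tau>' where
    "fst (ch (Suc (a + k))) < \<tau>'" "\<tau>' < \<tau>" "1 - int k - 1 \<le> \<sigma> \<tau>' (snd (ch (Suc (a + k))))" by auto
  then show ?case using tau(2) by (intro exI[of _ \<tau>']) auto
qed

lemma chain_distinct:
  assumes ch: "chain ch m" and ab: "a < b" "b \<le> m" "b \<le> a + nproc V + 2"
  shows "snd (ch a) \<noteq> snd (ch b)"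
proof
  assume same: "snd (ch a) = snd (ch b)"
  show False
  proof (cases "b = Suc a")
    case True
    then have "C (ch a) (ch b)" using chain_C[OF ch, of a] ab by auto
    then have "E (snd (ch a)) (snd (ch b))" by (simp add: C_def)
    then show False using same eirr by auto
  next
    case False
    then have ab2: "a + 2 \<le> b" using ab by auto
    from chain_iter[OF ch ab2 ab(2,3) same, of "b - 1 - a"] obtain \<tau> where
      "fst (ch (a + (b - 1 - a))) < \<tau>" "\<tau> + (b - 1 - a) \<le> Suc (fst (ch (b - 1)))" by auto
    moreover have "a + (b - 1 - a) = b - 1" using ab2 by auto
    ultimately show False using ab2 by auto
  qed
qed

lemma chain_bound: "chain ch (nproc V) \<Longrightarrow> False"
proof -
  assume ch: "chain ch (nproc V)"
  have inj: "inj_on (\<lambda>j. snd (ch j)) {0..nproc V}"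
  proof (rule inj_onI)
    fix x y assume xy: "x \<in> {0..nproc V}" "y \<in> {0..nproc V}" "snd (ch x) = snd (ch y)"
    show "x = y"
    proof (rule ccontr)
      assume "x \<noteq> y"
      then show False using chain_distinct[OF ch, of x y] chain_distinct[OF ch, of y x] xy
        by (auto simp: neq_iff)
    qed
  qed
  have "(\<lambda>j. snd (ch j)) ` {0..nproc V} \<subseteq> V"
  proof
    fix x assume "x \<in> (\<lambda>j. snd (ch j)) ` {0..nproc V}"
    then obtain j where j: "j \<le> nproc V" "x = snd (ch j)" by auto
    obtain t u where tu: "ch j = (t, u)" by (cases "ch j")
    have "(t, u) \<in> Ev" using chain_Ev[OF ch j(1)] tu by simp
    then show "x \<in> V" using ev_facts j tu by auto
  qed
  from card_inj_on_le[OF inj this finV] show False by (simp add: nproc_def)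
qed


definition root where "root e \<longleftrightarrow> e \<in> Ev \<and> \<not> (\<exists>e'\<in>Ev. C e' e)"
definition cs where "cs e = (if \<exists>e'\<in>Ev. C e' e then SOME e'. e' \<in> Ev \<and> C e' e else e)"

lemma cs_props: "e \<in> Ev \<Longrightarrow> cs e \<in> Ev \<and> (\<not> root e \<longrightarrow> C (cs e) e)"
proof -
  assume e: "e \<in> Ev"
  show ?thesis
  proof (cases "\<exists>e'\<in>Ev. C e' e")
    case True
    then have "cs e \<in> Ev \<and> C (cs e) e" unfolding cs_def using someI_ex[of "\<lambda>e'. e' \<in> Ev \<and> C e' e"] by auto
    then show ?thesis by auto
  next
    case False then show ?thesis using e by (auto simp: cs_def root_def)
  qed
qed

lemma cs_root: "root e \<Longrightarrow> cs e = e" by (auto simp: cs_def root_def)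

lemma funpow_Ev: "e \<in> Ev \<Longrightarrow> (cs ^^ k) e \<in> Ev"
  by (induction k) (auto simp: cs_props)

lemma root_stable: "root ((cs ^^ j) e) \<Longrightarrow> j \<le> k \<Longrightarrow> (cs ^^ k) e = (cs ^^ j) e"
proof (induction k)
  case 0 then show ?case by auto
next
  case (Suc k)
  then show ?case
  proof (cases "j = Suc k")
    case False
    then have "(cs ^^ k) e = (cs ^^ j) e" using Suc by auto
    then show ?thesis using cs_root[OF Suc.prems(1)] by simp
  qed auto
qed

lemma roots_fin: "finite {e. root e}"
proof -
  have "{e. root e} \<subseteq> (\<Union>u\<in>V. \<Union>w\<in>V. rootI u w \<union> rootII u w)"
  proof
    fix e assume "e \<in> {e. root e}"
    then have "e \<in> Ev" "\<not> (\<exists>e'\<in>Ev. C e' e)" by (auto simp: root_def)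
    then show "e \<in> (\<Union>u\<in>V. \<Union>w\<in>V. rootI u w \<union> rootII u w)" using classify[of e] by blast
  qed
  moreover have "finite (\<Union>u\<in>V. \<Union>w\<in>V. rootI u w \<union> rootII u w)"
    using finV rootI_fin rootII_fin by auto
  ultimately show ?thesis using finite_subset by auto
qed

definition FF where "FF k = {e \<in> Ev. root ((cs ^^ k) e)}"

lemma FF_fin: "finite (FF k)"
proof (induction k)
  case 0
  have "FF 0 \<subseteq> {e. root e}" by (auto simp: FF_def)
  then show ?case using roots_fin finite_subset by auto
next
  case (Suc k)
  define G where "G e' u = {e. e \<in> Ev \<and> \<not> root e \<and> cs e = e' \<and> snd e = u}" for e' u
  have Gf: "finite (G e' u)" for e' u
  proof (rule subsingleton_finite)
    fix x y assume xy: "x \<in> G e' u" "y \<in> G e' u"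
    then have a: "x \<in> Ev" "y \<in> Ev" "\<not> root x" "\<not> root y" "cs x = e'" "cs y = e'" "snd x = snd y"
      by (auto simp: G_def)
    have "C (cs x) x" using cs_props[OF a(1)] a(3) by auto
    moreover have "C (cs y) y" using cs_props[OF a(2)] a(4) by auto
    ultimately have "C e' x" "C e' y" "x \<in> Ev" "y \<in> Ev" "snd x = snd y" using a by auto
    then show "x = y" by (rule cause_inj)
  qed
  have "FF (Suc k) \<subseteq> {e. root e} \<union> (\<Union>e'\<in>FF k. \<Union>u\<in>V. G e' u)"
  proof
    fix e assume e: "e \<in> FF (Suc k)"
    have sr: "(cs ^^ Suc k) e = (cs ^^ k) (cs e)" by (simp only: funpow_Suc_right o_apply)
    have eE: "e \<in> Ev" and r: "root ((cs ^^ k) (cs e))" using e sr by (auto simp: FF_def)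
    show "e \<in> {e. root e} \<union> (\<Union>e'\<in>FF k. \<Union>u\<in>V. G e' u)"
    proof (cases "root e")
      case False
      have "cs e \<in> FF k" using r cs_props[OF eE] by (auto simp: FF_def)
      moreover have "snd e \<in> V" using eE ev_facts by (cases e) auto
      ultimately show ?thesis using False eE by (auto simp: G_def)
    qed auto
  qed
  moreover have "finite ({e. root e} \<union> (\<Union>e'\<in>FF k. \<Union>u\<in>V. G e' u))"
    using roots_fin Suc.IH finV Gf by auto
  ultimately show ?case using finite_subset by auto
qed

lemma Ev_fin: "finite Ev"
proof -
  have "Ev \<subseteq> FF (nproc V)"
  proof
    fix e assume e: "e \<in> Ev"
    show "e \<in> FF (nproc V)"
    proof (rule ccontr)
      assume nr: "e \<notin> FF (nproc V)"
      define m where "m = nproc V"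
      have nrj: "\<not> root ((cs ^^ j) e)" if "j \<le> m" for j
        using root_stable[of j e m] nr that e by (auto simp: FF_def m_def)
      define ch where "ch i = (cs ^^ (m - i)) e" for i
      have "chain ch m" unfolding chain_def
      proof (intro conjI allI impI)
        fix j assume "j \<le> m" then show "ch j \<in> Ev" using funpow_Ev[OF e] by (simp add: ch_def)
      next
        fix j assume j: "j < m"
        have "m - j = Suc (m - Suc j)" using j by auto
        then have "ch j = cs (ch (Suc j))" by (simp add: ch_def)
        moreover have "ch (Suc j) \<in> Ev" "\<not> root (ch (Suc j))"
          using funpow_Ev[OF e] nrj[of "m - Suc j"] by (auto simp: ch_def)
        ultimately show "C (ch j) (ch (Suc j))" using cs_props by auto
      qed
      then show False using chain_bound by (simp add: m_def)
    qed
  qed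
  then show ?thesis using FF_fin finite_subset by auto
qed

lemma no_late_reset: "\<exists>T. \<forall>t\<ge>T. \<forall>u\<in>A t. \<not> reInit V E (\<sigma> t) u"
proof -
  have "finite (fst ` Ev)" using Ev_fin by auto
  then obtain M where M: "\<forall>x\<in>fst ` Ev. x \<le> M" using finite_nat_set_iff_bounded_le by auto
  show ?thesis
  proof (intro exI[of _ "Suc M"] allI impI ballI notI)
    fix t u assume t: "Suc M \<le> t" and u: "u \<in> A t" and r: "reInit V E (\<sigma> t) u"
    then have "(t, u) \<in> Ev" by (auto simp: Ev_def)
    then have "t \<le> M" using M by force
    then show False using t by auto
  qed
qed


lemma reach_legit: "\<exists>t. legit (\<sigma> t)"
proof -
  obtain T where T: "\<forall>t\<ge>T. \<forall>u\<in>A t. \<not> reInit V E (\<sigma> t) u" using no_late_reset by auto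
  have ph: "\<sigma> (Suc i) v = phi V E (\<sigma> i v)" if "i \<ge> T" "v \<in> A i" for i v
    using step_move[OF steps that(2)] T that by (auto simp: etapeConv_def phi_neg)
  have trm: "nat (- \<sigma> (Suc i) v) \<le> nat (- \<sigma> i v) \<and> (v \<in> A i \<and> \<sigma> i v < 0 \<longrightarrow> nat (- \<sigma> (Suc i) v) < nat (- \<sigma> i v))"
    if i: "i \<ge> T" and v: "v \<in> V" for i v
  proof (cases "v \<in> A i")
    case True
    have b: "- NN \<le> \<sigma> i v" "\<sigma> i v < KK" using cfg[OF cfgi v] by auto
    show ?thesis
    proof (cases "\<sigma> i v < 0")
      case True2: True
      then show ?thesis using ph[OF i True] phi_neg by auto
    next
      case False
      then show ?thesis using ph[OF i True] phi_pos[of "\<sigma> i v"] b by auto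
    qed
  next
    case False then show ?thesis using stay by auto
  qed
  define Phi where "Phi i = (\<Sum>v\<in>V. nat (- \<sigma> i v))" for i
  have Pmono: "\<forall>i\<ge>T. Phi (Suc i) \<le> Phi i" unfolding Phi_def using trm by (auto intro: sum_mono)
  have Pstrict: "Phi (Suc i) < Phi i" if "i \<ge> T" "v \<in> A i" "\<sigma> i v < 0" for i v
  proof -
    have vV: "v \<in> V" using A_sub that by auto
    show ?thesis unfolding Phi_def
      by (rule sum_strict_mono_ex1[OF finV]) (use trm that vV in auto)
  qed
  obtain T2 where T2: "T \<le> T2" "\<forall>y. T \<le> y \<longrightarrow> Phi T2 \<le> Phi y"
    using ex_has_least_nat[of "\<lambda>i. T \<le> i" T Phi] by auto
  have nonneg_mv: "0 \<le> \<sigma> i v" if "i \<ge> T2" "v \<in> A i" for i v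
  proof (rule ccontr)
    assume "\<not> 0 \<le> \<sigma> i v"
    then have "Phi (Suc i) < Phi i" using Pstrict[of i v] that T2 by auto
    moreover have "Phi i \<le> Phi T2" using antimono_from[OF Pmono T2(1), of i] that by auto
    moreover have "Phi T2 \<le> Phi (Suc i)" using T2 that by auto
    ultimately show False by auto
  qed
  have na: "NAphase T2" unfolding NAphase_def
  proof (intro allI impI ballI)
    fix i v assume i: "T2 \<le> i" and v: "v \<in> A i"
    have "0 \<le> \<sigma> i v" using nonneg_mv i v by auto
    moreover have "\<not> reInit V E (\<sigma> i) v" using T i v T2 by auto
    ultimately show "etapeNorm V E (\<sigma> i) v \<and> \<sigma> (Suc i) v = phi V E (\<sigma> i v)"
      using step_move[OF steps v] by (auto simp: etapeConv_def)
  qed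
  have stab1: "0 \<le> \<sigma> (Suc i) v" if "i \<ge> T" "0 \<le> \<sigma> i v" "v \<in> V" for i v
  proof (cases "v \<in> A i")
    case True
    then show ?thesis using ph[OF that(1) True] phi_pos[of "\<sigma> i v"] cfg[OF cfgi that(3)] that by auto
  next
    case False then show ?thesis using stay that by auto
  qed
  have stabk: "0 \<le> \<sigma> (i + k) v" if "i \<ge> T" "0 \<le> \<sigma> i v" "v \<in> V" for i k v
    using that by (induction k) (use stab1 in auto)
  have cork: "correct V E (\<sigma> (i + k)) v u" if "i \<ge> T" "correct V E (\<sigma> i) v u" "E v u" for i k v u
    using that
  proof (induction k)
    case 0 then show ?case by simp
  next
    case (Suc k)
    have c: "correct V E (\<sigma> (i + k)) v u" using Suc by auto
    have uv: "v \<in> V" "u \<in> V" using edgeV Suc.prems(3) by auto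
    have "0 \<le> \<sigma> (Suc (i + k)) v" "0 \<le> \<sigma> (Suc (i + k)) u"
      using stab1[of "i + k"] c Suc.prems uv by (auto simp: correct_def)
    then show ?case using correct_persist[OF cfgi steps Suc.prems(3) c] by simp
  qed
  have ex: "\<exists>i\<ge>T2. v \<in> A i" if "v \<in> V" for v
    using allmove[OF na that] by (auto simp: moves_fin_def)
  define iv where "iv v = (SOME i. i \<ge> T2 \<and> v \<in> A i)" for v
  have iv: "iv v \<ge> T2 \<and> v \<in> A (iv v)" if "v \<in> V" for v
    unfolding iv_def using someI_ex[OF ex[OF that]] by simp
  define tm where "tm = Max (iv ` V)"
  have tm: "iv v \<le> tm" if "v \<in> V" for v using that finV by (auto simp: tm_def)
  have "legit (\<sigma> tm)" unfolding legit_def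
  proof (intro ballI conjI allI impI)
    fix v assume v: "v \<in> V"
    have i: "iv v \<ge> T" "v \<in> A (iv v)" using iv[OF v] T2 by auto
    have en: "etapeNorm V E (\<sigma> (iv v)) v" "0 \<le> \<sigma> (iv v) v" using na i iv[OF v] nonneg_mv by (auto simp: NAphase_def)
    have eq: "tm = iv v + (tm - iv v)" using tm[OF v] by auto
    show "0 \<le> \<sigma> tm v" using stabk[OF i(1) en(2) v, of "tm - iv v"] eq by metis
    show "\<sigma> tm v < KK" using cfg[OF cfgi v] by auto
    fix u assume e: "E v u"
    have "correct V E (\<sigma> (iv v)) v u" using en(1) e by (auto simp: etapeNorm_def dest: tc_nb)
    then show "correct V E (\<sigma> tm) v u" using cork[OF i(1) _ e, of "tm - iv v"] eq by metis
  qed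
  then show ?thesis by auto
qed

end

context G begin

lemma exec_inf:
  assumes c: "is_config V E r0" and ex: "is_exec_did V E r0 \<sigma> A len"
  shows "len = \<infinity>"
proof (rule ccontr)
  assume "len \<noteq> \<infinity>"
  then obtain k where k: "len = enat k" by (cases len) auto
  have st: "step_did V E (\<sigma> i) (A i) (\<sigma> (Suc i))" if "i < k" for i
    using ex k that by (auto simp: is_exec_did_def)
  have "is_config V E (\<sigma> i)" if "i \<le> k" for i
    using that
  proof (induction i)
    case 0 then show ?case using ex c by (simp add: is_exec_did_def)
  next
    case (Suc i)
    have i: "i < k" using Suc.prems by simp
    then have "is_config V E (\<sigma> i)" using Suc.IH by simp
    then show ?case using step_config[OF _ st[OF i]] by simp
  qed
  then obtain v where v: "v \<in> V" "enabled V E (\<sigma> k) v" using no_deadlock by blast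
  from step_exists[OF v] show False using ex k by (auto simp: is_exec_did_def)
qed

end

theorem theorem1:
  fixes V :: "'v set" and E :: "'v \<Rightarrow> 'v \<Rightarrow> bool" and ident :: "'v \<Rightarrow> nat"
  assumes "is_conn_graph V E"
    and "bij_betw ident V {0..<nproc V}"
  shows "self_stab_EMSS_did V E ident"
proof -
  interpret G V E by unfold_locales (rule assms(1))
  show ?thesis unfolding self_stab_EMSS_did_def
  proof (intro allI impI)
    fix r0 \<sigma> A len assume c: "is_config V E r0" and ex: "is_exec_did V E r0 \<sigma> A len"
    have len: "len = \<infinity>" using exec_inf[OF c ex] .
    interpret X: Ex V E \<sigma> A
      by unfold_locales (use ex len c in \<open>auto simp: is_exec_did_def\<close>)
    obtain t where t: "legit (\<sigma> t)" using X.reach_legit by auto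
    show "\<exists>i. enat i \<le> len \<and> (\<forall>\<sigma>' A' len'. is_exec_did V E (\<sigma> i) \<sigma>' A' len' \<longrightarrow> spec_EM V E ident \<sigma>' A' len')"
    proof (intro exI[of _ t] conjI allI impI)
      show "enat t \<le> len" using len by simp
      fix \<sigma>' A' len' assume ex': "is_exec_did V E (\<sigma> t) \<sigma>' A' len'"
      have len': "len' = \<infinity>" using exec_inf[OF legit_config[OF t] ex'] .
      interpret Y: Ex V E \<sigma>' A'
        by unfold_locales (use ex' len' legit_config[OF t] in \<open>auto simp: is_exec_did_def\<close>)
      have "legit (\<sigma>' 0)" using ex' t by (simp add: is_exec_did_def)
      then show "spec_EM V E ident \<sigma>' A' len'" using Y.legit_spec[OF _ assms(2)] len' by simp
    qed
  qed
qed

end
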